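(* Let $A$ be a finite set of options and consider $V\ge1$ votes, each a truncated ranking with possible ties, interpreted as in the context, with associated Llull matrix $v$ and path scores $v^*$. Let $x,y\in A$ be distinct and assume $x$ dominates $y$ in the sense of Pareto. Then for every $a\in A\setminus\{x,y\}$: $v_{xa}\ge v_{ya}$, $v_{ay}\ge v_{ax}$, $v^*_{xa}\ge v^*_{ya}$, $v^*_{ay}\ge v^*_{ax}$; and moreover $v^*_{xy}\ge v^*_{yx}$.
   Context: A truncated ranking with ties is a weak order on a subset $R$ of $A$ (the ranked options). It is interpreted as follows: for ranked options, $x$ is preferred to $y$ if $x$ is strictly above $y$, and $x,y$ are ranked equally if they are tied; every ranked option is preferred to every unranked option; no comparison is made between two unranked options. The Llull matrix is $v_{xy}=(\#\{\text{votes preferring }x\text{ to }y\}+\tfrac12\#\{\text{votes ranking }x,y\text{ equally}\})/V$. Path scores: $v^*_{xy}=\max\min(v_{x_0x_1},\dots,v_{x_{m-1}x_m})$ over all paths $x_0\dots x_m$ ($m\ge1$, $x_0=x$, $x_m=y$, $x_i$ pairwise distinct). $x$ dominates $y$ in the sense of Pareto if every vote (as interpreted) either prefers $x$ to $y$ or ranks $x$ and $y$ equally, and at least one vote prefers $x$ to $y$. *)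

theory Defs
  imports Complex_Main "HOL-Library.Multiset"
begin

text \<open>A truncated ranking with ties on a set A of options is encoded as a rank function
  r :: 'a => nat option: r x = None means x is unranked; r x = Some k means x is ranked at
  level k (smaller level = higher position).
  Every weak order on a finite subset R of A arises in this way.\<close>

definition ballot :: "'a set \<Rightarrow> ('a \<Rightarrow> nat option) \<Rightarrow> bool" where
  "ballot A r \<longleftrightarrow> {x. r x \<noteq> None} \<subseteq> A"

definition prefers :: "('a \<Rightarrow> nat option) \<Rightarrow> 'a \<Rightarrow> 'a \<Rightarrow> bool" where
  "prefers r x y \<longleftrightarrow>
     (\<exists>i j. r x = Some i \<and> r y = Some j \<and> i < j) \<or> (r x \<noteq> None \<and> r y = None)"

definition ranks_equal :: "('a \<Rightarrow> nat option) \<Rightarrow> 'a \<Rightarrow> 'a \<Rightarrow> bool" where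
  "ranks_equal r x y \<longleftrightarrow> (\<exists>i. r x = Some i \<and> r y = Some i)"

definition llull :: "('a \<Rightarrow> nat option) multiset \<Rightarrow> 'a \<Rightarrow> 'a \<Rightarrow> real" where
  "llull P x y =
     (real (size (filter_mset (\<lambda>r. prefers r x y) P))
      + real (size (filter_mset (\<lambda>r. ranks_equal r x y) P)) / 2) / real (size P)"

definition is_path :: "'a set \<Rightarrow> 'a \<Rightarrow> 'a \<Rightarrow> 'a list \<Rightarrow> bool" where
  "is_path A x y p \<longleftrightarrow> length p \<ge> 2 \<and> hd p = x \<and> last p = y \<and> distinct p \<and> set p \<subseteq> A"

definition path_strength :: "('a \<Rightarrow> nat option) multiset \<Rightarrow> 'a list \<Rightarrow> real" where
  "path_strength P p = Min ((\<lambda>i. llull P (p ! i) (p ! Suc i)) ` {..<length p - 1})"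

definition path_score :: "'a set \<Rightarrow> ('a \<Rightarrow> nat option) multiset \<Rightarrow> 'a \<Rightarrow> 'a \<Rightarrow> real" where
  "path_score A P x y = Max (path_strength P ` {p. is_path A x y p})"

definition pareto_dominates :: "('a \<Rightarrow> nat option) multiset \<Rightarrow> 'a \<Rightarrow> 'a \<Rightarrow> bool" where
  "pareto_dominates P x y \<longleftrightarrow>
     (\<forall>r\<in>#P. prefers r x y \<or> ranks_equal r x y) \<and> (\<exists>r\<in>#P. prefers r x y)"

end

theory Submission
  imports Defs
begin

definition sc :: "('a \<Rightarrow> nat option) \<Rightarrow> 'a \<Rightarrow> 'a \<Rightarrow> real" where
  "sc r a b = (if prefers r a b then 1 else 0) + (if ranks_equal r a b then 1/2 else 0)"

lemma num_alt:
  "real (size (filter_mset (\<lambda>r. prefers r a b) P))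
      + real (size (filter_mset (\<lambda>r. ranks_equal r a b) P)) / 2
   = sum_mset (image_mset (\<lambda>r. sc r a b) P)"
  by (induction P) (auto simp: sc_def field_simps)

lemma llull_alt: "llull P a b = sum_mset (image_mset (\<lambda>r. sc r a b) P) / real (size P)"
  unfolding llull_def num_alt ..

lemma llull_mono:
  assumes "\<forall>r\<in>#P. sc r a b \<le> sc r c d"
  shows "llull P a b \<le> llull P c d"
  unfolding llull_alt
  by (rule divide_right_mono) (auto intro: sum_mset_mono simp: assms)

lemma L1: "prefers r x y \<or> ranks_equal r x y \<Longrightarrow> sc r y c \<le> sc r x c"
  unfolding sc_def prefers_def ranks_equal_def
  by (cases "r x"; cases "r y"; cases "r c"; auto)

lemma L2: "prefers r x y \<or> ranks_equal r x y \<Longrightarrow> sc r c x \<le> sc r c y"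
  unfolding sc_def prefers_def ranks_equal_def
  by (cases "r x"; cases "r y"; cases "r c"; auto)

lemma L3: "prefers r x y \<or> ranks_equal r x y \<Longrightarrow> sc r y x \<le> sc r x y"
  unfolding sc_def prefers_def ranks_equal_def
  by (cases "r x"; cases "r y"; auto)

lemma strength_ge:
  assumes "length q \<ge> 2" "length p \<ge> 2"
    "\<forall>i<length q - 1. \<exists>j<length p - 1. llull P (q!i) (q!Suc i) \<ge> llull P (p!j) (p!Suc j)"
  shows "path_strength P q \<ge> path_strength P p"
  unfolding path_strength_def
proof (rule Min.boundedI)
  show "finite ((\<lambda>i. llull P (q ! i) (q ! Suc i)) ` {..<length q - 1})" by simp
  have "0 \<in> {..<length q - 1}" using assms(1) by auto
  then show "(\<lambda>i. llull P (q ! i) (q ! Suc i)) ` {..<length q - 1} \<noteq> {}" by blast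
  fix e assume "e \<in> (\<lambda>i. llull P (q ! i) (q ! Suc i)) ` {..<length q - 1}"
  then obtain i where i: "i < length q - 1" "e = llull P (q ! i) (q ! Suc i)" by auto
  then obtain j where j: "j < length p - 1" "llull P (q!i) (q!Suc i) \<ge> llull P (p!j) (p!Suc j)"
    using assms(3) by blast
  have "Min ((\<lambda>i. llull P (p ! i) (p ! Suc i)) ` {..<length p - 1}) \<le> llull P (p!j) (p!Suc j)"
    by (rule Min_le) (use j in auto)
  then show "Min ((\<lambda>i. llull P (p ! i) (p ! Suc i)) ` {..<length p - 1}) \<le> e"
    using i j by linarith
qed

lemma paths_finite:
  assumes "finite A" shows "finite {p. is_path A u v p}"
proof (rule finite_subset)
  show "{p. is_path A u v p} \<subseteq> {xs. set xs \<subseteq> A \<and> length xs \<le> card A}"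
    unfolding is_path_def using assms by (auto simp: distinct_card[symmetric] intro: card_mono)
  show "finite {xs. set xs \<subseteq> A \<and> length xs \<le> card A}"
    using assms by (rule finite_lists_length_le)
qed

lemma score_ge:
  assumes "finite A" "\<exists>p. is_path A u v p"
    "\<forall>p. is_path A u v p \<longrightarrow> (\<exists>q. is_path A u' v' q \<and> path_strength P q \<ge> path_strength P p)"
  shows "path_score A P u' v' \<ge> path_score A P u v"
proof -
  let ?S = "path_strength P ` {p. is_path A u v p}"
  have "Max ?S \<in> ?S" using assms(2) paths_finite[OF assms(1), of u v] by (intro Max_in) auto
  then obtain p where p: "is_path A u v p" "Max ?S = path_strength P p" by auto
  then obtain q where q: "is_path A u' v' q" "path_strength P q \<ge> path_strength P p"
    using assms(3) by blast
  have "path_strength P q \<le> Max (path_strength P ` {p. is_path A u' v' p})"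
    using q paths_finite[OF assms(1), of u' v'] by (intro Max_ge) auto
  then show ?thesis using p q unfolding path_score_def by linarith
qed

lemma suffix_path:
  assumes "is_path A u v p" "z \<in> set p" "z \<noteq> v"
  shows "\<exists>q. is_path A z v q \<and> path_strength P q \<ge> path_strength P p"
proof -
  obtain s w where sw: "p = s @ z # w" using split_list assms(2) by metis
  have wne: "w \<noteq> []" using assms(1,3) sw unfolding is_path_def by auto
  have ip: "is_path A z v (z # w)" using assms(1) sw wne unfolding is_path_def by (cases w) auto
  have "path_strength P (z # w) \<ge> path_strength P p"
  proof (rule strength_ge)
    show "2 \<le> length (z # w)" using wne by (cases w) auto
    show "2 \<le> length p" using assms(1) unfolding is_path_def by auto
    show "\<forall>i<length (z # w) - 1. \<exists>j<length p - 1. llull P ((z # w) ! i) ((z # w) ! Suc i)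
        \<ge> llull P (p ! j) (p ! Suc j)"
    proof (intro allI impI)
      fix i assume i: "i < length (z # w) - 1"
      have "p ! (length s + i) = (z#w) ! i" "p ! Suc (length s + i) = (z#w) ! Suc i"
        using sw by (simp_all add: nth_append)
      moreover have "length s + i < length p - 1" using i sw by auto
      ultimately show "\<exists>j<length p - 1. llull P ((z # w) ! i) ((z # w) ! Suc i)
        \<ge> llull P (p ! j) (p ! Suc j)" by (intro exI[of _ "length s + i"]) auto
    qed
  qed
  then show ?thesis using ip by blast
qed

lemma prefix_path:
  assumes "is_path A u v p" "z \<in> set p" "z \<noteq> u"
  shows "\<exists>q. is_path A u z q \<and> path_strength P q \<ge> path_strength P p"
proof -
  obtain s w where sw: "p = s @ z # w" using split_list assms(2) by metis
  have sne: "s \<noteq> []" using assms(1,3) sw unfolding is_path_def by auto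
  define q where "q = s @ [z]"
  have ip: "is_path A u z q" using assms(1) sw sne unfolding is_path_def q_def by (cases s) auto
  have "path_strength P q \<ge> path_strength P p"
  proof (rule strength_ge)
    show "2 \<le> length q" using sne unfolding q_def by (cases s) auto
    show "2 \<le> length p" using assms(1) unfolding is_path_def by auto
    show "\<forall>i<length q - 1. \<exists>j<length p - 1. llull P (q ! i) (q ! Suc i)
        \<ge> llull P (p ! j) (p ! Suc j)"
    proof (intro allI impI)
      fix i assume i: "i < length q - 1"
      have "p ! i = q ! i" "p ! Suc i = q ! Suc i"
        using sw i unfolding q_def by (auto simp: nth_append)
      moreover have "i < length p - 1" using i sw q_def by auto
      ultimately show "\<exists>j<length p - 1. llull P (q ! i) (q ! Suc i)
        \<ge> llull P (p ! j) (p ! Suc j)" by (intro exI[of _ i]) auto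
    qed
  qed
  then show ?thesis using ip by blast
qed

lemma swap_path:
  fixes x y :: 'a
  defines "sw \<equiv> (\<lambda>z. if z = x then y else if z = y then x else z)"
  assumes dom: "\<forall>r\<in>#P. prefers r x y \<or> ranks_equal r x y"
    and xy: "x \<in> A" "y \<in> A" "x \<noteq> y"
    and p: "is_path A u v p" and hy: "y \<in> set p \<longrightarrow> hd p = y" and hx: "x \<in> set p \<longrightarrow> last p = x"
  shows "\<exists>q. is_path A (sw u) (sw v) q \<and> path_strength P q \<ge> path_strength P p"
proof -
  have len: "length p \<ge> 2" and d: "distinct p" and hd: "hd p = u" and lst: "last p = v"
    and sA: "set p \<subseteq> A"
    using p unfolding is_path_def by auto
  have inj: "inj sw" unfolding sw_def inj_def by auto
  have ip: "is_path A (sw u) (sw v) (map sw p)"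
  proof -
    have ne: "p \<noteq> []" using len by auto
    have i2: "inj_on sw (set p)" using inj by (rule inj_on_subset) simp
    have "set (map sw p) \<subseteq> A" using sA xy unfolding sw_def by auto
    then show ?thesis unfolding is_path_def using len d hd lst ne i2
      by (simp add: hd_map last_map distinct_map)
  qed
  have "path_strength P (map sw p) \<ge> path_strength P p"
  proof (rule strength_ge)
    show "2 \<le> length (map sw p)" "2 \<le> length p" using len by auto
    show "\<forall>i<length (map sw p) - 1. \<exists>j<length p - 1. llull P (map sw p ! i) (map sw p ! Suc i)
        \<ge> llull P (p ! j) (p ! Suc j)"
    proof (intro allI impI)
      fix i assume i: "i < length (map sw p) - 1"
      have a: "p ! i \<noteq> x"
      proof
        assume e: "p ! i = x"
        then have "x \<in> set p" using i by auto
        then have "p ! (length p - 1) = x" using hx len last_conv_nth[of p] by fastforce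
        moreover have "i < length p" "length p - 1 < length p" using i len by auto
        ultimately show False using e i nth_eq_iff_index_eq[OF d, of i "length p - 1"] by simp
      qed
      have b: "p ! Suc i \<noteq> y"
      proof
        assume e: "p ! Suc i = y"
        then have "y \<in> set p" using i by auto
        then have "p ! 0 = y" using hy len hd_conv_nth[of p] by fastforce
        moreover have "Suc i < length p" "0 < length p" using i len by auto
        ultimately show False using e nth_eq_iff_index_eq[OF d, of "Suc i" 0] by simp
      qed
      have "llull P (sw (p!i)) (sw (p!Suc i)) \<ge> llull P (p ! i) (p ! Suc i)"
      proof (rule llull_mono, intro ballI)
        fix r assume "r \<in># P"
        then have D: "prefers r x y \<or> ranks_equal r x y" using dom by auto
        show "sc r (p ! i) (p ! Suc i) \<le> sc r (sw (p ! i)) (sw (p ! Suc i))"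
        proof (cases "p ! i = y")
          case True
          then show ?thesis
          proof (cases "p ! Suc i = x")
            case True then show ?thesis using \<open>p ! i = y\<close> L3[OF D] unfolding sw_def by simp
          next
            case False then show ?thesis using \<open>p ! i = y\<close> b L1[OF D] xy(3) unfolding sw_def by simp
          qed
        next
          case False
          then show ?thesis
          proof (cases "p ! Suc i = x")
            case True then show ?thesis using \<open>p ! i \<noteq> y\<close> a L2[OF D] xy(3) unfolding sw_def by simp
          next
            case False then show ?thesis using \<open>p ! i \<noteq> y\<close> a b unfolding sw_def by simp
          qed
        qed
      qed
      then show "\<exists>j<length p - 1. llull P (map sw p ! i) (map sw p ! Suc i)
        \<ge> llull P (p ! j) (p ! Suc j)" using i by (intro exI[of _ i]) auto
    qed
  qed
  then show ?thesis using ip by blast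
qed

theorem proposition4p1:
  fixes A :: "'a set" and P :: "('a \<Rightarrow> nat option) multiset" and x y :: 'a
  assumes "finite A"
    and "size P \<ge> 1"
    and "\<forall>r\<in>#P. ballot A r"
    and "x \<in> A" and "y \<in> A" and "x \<noteq> y"
    and "pareto_dominates P x y"
  shows "(\<forall>a\<in>A - {x, y}.
            llull P x a \<ge> llull P y a \<and> llull P a y \<ge> llull P a x \<and>
            path_score A P x a \<ge> path_score A P y a \<and>
            path_score A P a y \<ge> path_score A P a x)
         \<and> path_score A P x y \<ge> path_score A P y x"
proof -
  have dom: "\<forall>r\<in>#P. prefers r x y \<or> ranks_equal r x y"
    using assms(7) unfolding pareto_dominates_def by auto
  have ex: "\<exists>p. is_path A u v p" if "u \<in> A" "v \<in> A" "u \<noteq> v" for u v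
    using that by (intro exI[of _ "[u,v]"]) (simp add: is_path_def)
  have SW: "\<exists>q. is_path A ((\<lambda>z. if z = x then y else if z = y then x else z) u)
                          ((\<lambda>z. if z = x then y else if z = y then x else z) v) q
              \<and> path_strength P q \<ge> path_strength P p"
    if "is_path A u v p" "y \<in> set p \<longrightarrow> hd p = y" "x \<in> set p \<longrightarrow> last p = x" for u v p
    by (rule swap_path[OF dom assms(4,5,6) that])
  have part: "llull P x a \<ge> llull P y a \<and> llull P a y \<ge> llull P a x \<and>
            path_score A P x a \<ge> path_score A P y a \<and>
            path_score A P a y \<ge> path_score A P a x" if a: "a \<in> A - {x, y}" for a
  proof (intro conjI)
    have ax: "a \<noteq> x" "a \<noteq> y" "a \<in> A" using a by auto
    show "llull P x a \<ge> llull P y a"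
    proof (rule llull_mono, intro ballI)
      fix r assume "r \<in># P"
      show "sc r y a \<le> sc r x a" by (rule L1[OF dom[rule_format, OF \<open>r \<in># P\<close>]])
    qed
    show "llull P a y \<ge> llull P a x"
    proof (rule llull_mono, intro ballI)
      fix r assume "r \<in># P"
      show "sc r a x \<le> sc r a y" by (rule L2[OF dom[rule_format, OF \<open>r \<in># P\<close>]])
    qed
    show "path_score A P x a \<ge> path_score A P y a"
    proof (rule score_ge[OF assms(1)])
      show "\<exists>p. is_path A y a p" using ax assms(5) by (intro ex) auto
      show "\<forall>p. is_path A y a p \<longrightarrow> (\<exists>q. is_path A x a q \<and> path_strength P p \<le> path_strength P q)"
      proof (intro allI impI)
        fix p assume p: "is_path A y a p"
        show "\<exists>q. is_path A x a q \<and> path_strength P p \<le> path_strength P q"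
        proof (cases "x \<in> set p")
          case True
          have "x \<noteq> a" using ax by simp
          show ?thesis by (rule suffix_path[OF p True \<open>x \<noteq> a\<close>])
        next
          case False
          have "hd p = y" using p unfolding is_path_def by simp
          then have "\<exists>q. is_path A ((\<lambda>z. if z = x then y else if z = y then x else z) y)
                          ((\<lambda>z. if z = x then y else if z = y then x else z) a) q
              \<and> path_strength P q \<ge> path_strength P p"
            using False by (intro SW[OF p]) simp_all
          then show ?thesis using ax assms(6) by simp
        qed
      qed
    qed
    show "path_score A P a y \<ge> path_score A P a x"
    proof (rule score_ge[OF assms(1)])
      show "\<exists>p. is_path A a x p" using ax assms(4) by (intro ex) auto
      show "\<forall>p. is_path A a x p \<longrightarrow> (\<exists>q. is_path A a y q \<and> path_strength P p \<le> path_strength P q)"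
      proof (intro allI impI)
        fix p assume p: "is_path A a x p"
        show "\<exists>q. is_path A a y q \<and> path_strength P p \<le> path_strength P q"
        proof (cases "y \<in> set p")
          case True
          have "y \<noteq> a" using ax by simp
          show ?thesis by (rule prefix_path[OF p True \<open>y \<noteq> a\<close>])
        next
          case False
          have "last p = x" using p unfolding is_path_def by simp
          then have "\<exists>q. is_path A ((\<lambda>z. if z = x then y else if z = y then x else z) a)
                          ((\<lambda>z. if z = x then y else if z = y then x else z) x) q
              \<and> path_strength P q \<ge> path_strength P p"
            using False by (intro SW[OF p]) simp_all
          then show ?thesis using ax assms(6) by simp
        qed
      qed
    qed
  qed
  have "path_score A P x y \<ge> path_score A P y x"
  proof (rule score_ge[OF assms(1)])
    show "\<exists>p. is_path A y x p" using assms(4,5,6) by (intro ex) auto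
    show "\<forall>p. is_path A y x p \<longrightarrow> (\<exists>q. is_path A x y q \<and> path_strength P p \<le> path_strength P q)"
    proof (intro allI impI)
      fix p assume p: "is_path A y x p"
      have "hd p = y" "last p = x" using p unfolding is_path_def by simp_all
      then have "\<exists>q. is_path A ((\<lambda>z. if z = x then y else if z = y then x else z) y)
                          ((\<lambda>z. if z = x then y else if z = y then x else z) x) q
              \<and> path_strength P q \<ge> path_strength P p"
        by (intro SW[OF p]) simp_all
      then show "\<exists>q. is_path A x y q \<and> path_strength P p \<le> path_strength P q"
        using assms(6) by simp
    qed
  qed
  then show ?thesis using part by blast
qed

end
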